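(* Let $X$ and $\Lambda$ be nonempty sets, $f: X\to\mathbb{R}$, and $(f_\lambda)_{\lambda\in\Lambda}$ a family of real-valued functions on $X$ such that $(f_\lambda(x))_{\lambda\in\Lambda}\in\ell^\infty(\Lambda)$ for every $x\in X$ and the feasible set $X_0:=\{x\in X:\ \sup_{\lambda\in\Lambda}f_\lambda(x)\le0\}$ is nonempty. Assume $x^0\in X_0$ is an optimal solution, i.e. $f(x^0)=\inf_{x\in X_0}f(x)$, and that the Slater condition holds: there exists $x^1\in X$ with $\sup_{\lambda\in\Lambda}f_\lambda(x^1)<0$. Then there exists $\Phi_0\in\ell^\infty(\Lambda)^*_+$ such that $(x^0,\Phi_0)$ is a saddle point of the Lagrangian $\mathbf{L}$ if and only if the family $(f_\lambda)_{\lambda\in\Lambda}\cup(f-f(x^0))$ is infsup-convex on $X$.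
   Context: $\ell^\infty(\Lambda)$ is the Banach space of bounded real functions on $\Lambda$ (sup-norm), $\ell^\infty(\Lambda)^*_+$ the cone of positive continuous linear functionals on it ($\Phi(\varphi)\ge0$ whenever $\varphi\ge0$). The Lagrangian $\mathbf{L}: X\times\ell^\infty(\Lambda)^*_+\to\mathbb{R}$ is $\mathbf{L}(x,\Phi):=f(x)+\Phi((f_\lambda(x))_{\lambda\in\Lambda})$; $(x^0,\Phi_0)$ is a saddle point if $\mathbf{L}(x^0,\Phi)\le\mathbf{L}(x^0,\Phi_0)\le\mathbf{L}(x,\Phi_0)$ for all $(x,\Phi)\in X\times\ell^\infty(\Lambda)^*_+$. The family $(f_\lambda)_{\lambda\in\Lambda}\cup(f-f(x^0))$ is the family indexed by $\Lambda\cup\{\mu\}$ ($\mu\notin\Lambda$) whose $\mu$-th member is $f-f(x^0)$. With $\Delta_m:=\{\mathbf t\in\mathbb{R}^m: t_j\ge0,\sum t_j=1\}$, a family $(g_i)_{i\in I}$ of real functions on $X$ is infsup-convex on $X$ if for all $m\ge1$, $\mathbf{t}\in\Delta_m$, $x_1,\dots,x_m\in X$: $\inf_{x\in X}\sup_{i\in I}g_i(x)\le\sup_{i\in I}\sum_{j=1}^m t_j g_i(x_j)$. *)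

theory Defs
  imports "HOL-Analysis.Analysis"
begin

text \<open>The index set Lambda and the set X are modelled as (nonempty) types 'l and 'x.
  Elements of ell-infinity(Lambda) are the bounded functions 'l => real.\<close>

definition linf :: "('l \<Rightarrow> real) set" where
  "linf = {\<phi>. bdd_above (range (\<lambda>l. \<bar>\<phi> l\<bar>))}"

definition sup_norm :: "('l \<Rightarrow> real) \<Rightarrow> real" where
  "sup_norm \<phi> = (SUP l. \<bar>\<phi> l\<bar>)"

text \<open>Positive continuous linear functionals on ell-infinity(Lambda)
  (only their values on linf matter).\<close>

definition pos_dual :: "(('l \<Rightarrow> real) \<Rightarrow> real) set" where
  "pos_dual = {\<Phi>.
     (\<forall>\<phi>\<in>linf. \<forall>\<psi>\<in>linf. \<Phi> (\<lambda>l. \<phi> l + \<psi> l) = \<Phi> \<phi> + \<Phi> \<psi>) \<and>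
     (\<forall>\<phi>\<in>linf. \<forall>c::real. \<Phi> (\<lambda>l. c * \<phi> l) = c * \<Phi> \<phi>) \<and>
     (\<exists>C. \<forall>\<phi>\<in>linf. \<bar>\<Phi> \<phi>\<bar> \<le> C * sup_norm \<phi>) \<and>
     (\<forall>\<phi>\<in>linf. (\<forall>l. 0 \<le> \<phi> l) \<longrightarrow> 0 \<le> \<Phi> \<phi>)}"

definition lagrangian ::
  "('x \<Rightarrow> real) \<Rightarrow> ('l \<Rightarrow> 'x \<Rightarrow> real) \<Rightarrow> 'x \<Rightarrow> (('l \<Rightarrow> real) \<Rightarrow> real) \<Rightarrow> real" where
  "lagrangian f fl x \<Phi> = f x + \<Phi> (\<lambda>l. fl l x)"

definition saddle_point ::
  "('x \<Rightarrow> real) \<Rightarrow> ('l \<Rightarrow> 'x \<Rightarrow> real) \<Rightarrow> 'x \<Rightarrow> (('l \<Rightarrow> real) \<Rightarrow> real) \<Rightarrow> bool" where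
  "saddle_point f fl x0 \<Phi>0 \<longleftrightarrow>
     (\<forall>x. \<forall>\<Phi>\<in>pos_dual.
        lagrangian f fl x0 \<Phi> \<le> lagrangian f fl x0 \<Phi>0 \<and>
        lagrangian f fl x0 \<Phi>0 \<le> lagrangian f fl x \<Phi>0)"

definition infsup_convex :: "('i \<Rightarrow> 'x \<Rightarrow> real) \<Rightarrow> bool" where
  "infsup_convex g \<longleftrightarrow>
     (\<forall>m::nat. \<forall>t::nat \<Rightarrow> real. \<forall>xs::nat \<Rightarrow> 'x.
        m \<ge> 1 \<and> (\<forall>j<m. 0 \<le> t j) \<and> (\<Sum>j<m. t j) = 1 \<longrightarrow>
        (INF x. SUP i. ereal (g i x)) \<le> (SUP i. ereal (\<Sum>j<m. t j * g i (xs j))))"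

text \<open>The family (f_lambda) joined with f - f(x0), indexed by 'l option (None = mu).\<close>

definition augmented_family ::
  "('x \<Rightarrow> real) \<Rightarrow> ('l \<Rightarrow> 'x \<Rightarrow> real) \<Rightarrow> 'x \<Rightarrow> 'l option \<Rightarrow> 'x \<Rightarrow> real" where
  "augmented_family f fl x0 i x =
     (case i of None \<Rightarrow> f x - f x0 | Some l \<Rightarrow> fl l x)"

end

theory Submission
  imports Defs
begin


lemma linf_iff: "\<phi> \<in> linf \<longleftrightarrow> (\<exists>B. \<forall>l. \<bar>\<phi> l\<bar> \<le> B)"
  unfolding linf_def bdd_above_def by auto

lemma linf_add: "\<phi> \<in> linf \<Longrightarrow> \<psi> \<in> linf \<Longrightarrow> (\<lambda>l. \<phi> l + \<psi> l) \<in> linf"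
proof -
  assume "\<phi> \<in> linf" "\<psi> \<in> linf"
  then obtain B C where "\<forall>l. \<bar>\<phi> l\<bar> \<le> B" "\<forall>l. \<bar>\<psi> l\<bar> \<le> C" by (auto simp: linf_iff)
  then have "\<forall>l. \<bar>\<phi> l + \<psi> l\<bar> \<le> B + C"
    by (meson abs_triangle_ineq add_mono order_trans)
  then show ?thesis by (auto simp: linf_iff)
qed

lemma linf_scale: "\<phi> \<in> linf \<Longrightarrow> (\<lambda>l. c * \<phi> l) \<in> linf"
proof -
  assume "\<phi> \<in> linf"
  then obtain B where B: "\<forall>l. \<bar>\<phi> l\<bar> \<le> B" by (auto simp: linf_iff)
  have "\<forall>l. \<bar>c * \<phi> l\<bar> \<le> \<bar>c\<bar> * B"
    using B by (simp add: abs_mult mult_left_mono)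
  then show ?thesis by (auto simp: linf_iff)
qed

lemma linf_neg: "\<phi> \<in> linf \<Longrightarrow> (\<lambda>l. - \<phi> l) \<in> linf"
  using linf_scale[of \<phi> "-1"] by simp

lemma linf_const: "(\<lambda>l. c) \<in> linf"
  by (auto simp: linf_iff)

lemma linf_upper: "\<phi> \<in> linf \<Longrightarrow> \<phi> l \<le> (SUP l. \<phi> l)"
  by (rule cSUP_upper) (auto simp: linf_iff bdd_above_def intro: abs_le_D1)

lemma linf_upper_abs: "\<phi> \<in> linf \<Longrightarrow> \<bar>\<phi> l\<bar> \<le> sup_norm \<phi>"
  unfolding sup_norm_def linf_def by (rule cSUP_upper) auto

definition addp :: "('l \<Rightarrow> real) \<times> real \<Rightarrow> ('l \<Rightarrow> real) \<times> real \<Rightarrow> ('l \<Rightarrow> real) \<times> real" where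
  "addp u v = (\<lambda>l. fst u l + fst v l, snd u + snd v)"
definition scalep :: "real \<Rightarrow> ('l \<Rightarrow> real) \<times> real \<Rightarrow> ('l \<Rightarrow> real) \<times> real" where
  "scalep c u = (\<lambda>l. c * fst u l, c * snd u)"
definition conep :: "(('l \<Rightarrow> real) \<times> real) set \<Rightarrow> bool" where
  "conep D \<longleftrightarrow> (\<forall>u\<in>D. \<forall>v\<in>D. addp u v \<in> D) \<and> (\<forall>u\<in>D. \<forall>c>0. scalep c u \<in> D)"

lemma maxcone:
  fixes E :: "(('l \<Rightarrow> real) \<times> real) set"
  assumes cE: "conep E" and badE: "(\<lambda>l. 0, -1) \<notin> E"
    and top: "\<And>r. r \<ge> 0 \<Longrightarrow> (\<lambda>l. 0, r) \<in> E"
    and fin: "\<And>\<phi>. \<phi> \<in> linf \<Longrightarrow> \<exists>r. (\<phi>, r) \<in> E"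
  shows "\<exists>L. (\<forall>\<phi>\<in>linf. \<forall>\<psi>\<in>linf. L (\<lambda>l. \<phi> l + \<psi> l) = L \<phi> + L \<psi>)
           \<and> (\<forall>\<phi>\<in>linf. \<forall>c. L (\<lambda>l. c * \<phi> l) = c * L \<phi>)
           \<and> (\<forall>\<phi> r. (\<phi>, r) \<in> E \<longrightarrow> \<phi> \<in> linf \<longrightarrow> L \<phi> \<le> r)"
proof -
  define A where "A = {D. E \<subseteq> D \<and> conep D \<and> (\<lambda>l. 0, -1) \<notin> D}"
  have "\<exists>M\<in>A. \<forall>X\<in>A. M \<subseteq> X \<longrightarrow> X = M"
  proof (rule subset_Zorn)
    fix C assume ch: "subset.chain A C"
    show "\<exists>U\<in>A. \<forall>X\<in>C. X \<subseteq> U"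
    proof (cases "C = {}")
      case True
      then show ?thesis using cE badE by (auto simp: A_def)
    next
      case False
      have CA: "C \<subseteq> A" and tot: "\<And>X Y. X \<in> C \<Longrightarrow> Y \<in> C \<Longrightarrow> X \<subseteq> Y \<or> Y \<subseteq> X"
        using ch by (auto simp: subset_chain_def)
      have "conep (\<Union>C)"
        unfolding conep_def
      proof (intro conjI ballI allI impI)
        fix u v assume "u \<in> \<Union>C" "v \<in> \<Union>C"
        then obtain X Y where XY: "X \<in> C" "Y \<in> C" "u \<in> X" "v \<in> Y" by auto
        show "addp u v \<in> \<Union>C"
        proof (cases "X \<subseteq> Y")
          case True
          then have "conep Y" using CA XY by (auto simp: A_def)
          then show ?thesis using True XY unfolding conep_def by blast
        next
          case False
          then have "Y \<subseteq> X" using tot XY by blast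
          moreover have "conep X" using CA XY by (auto simp: A_def)
          ultimately show ?thesis using XY unfolding conep_def by blast
        qed
      next
        fix u c assume "u \<in> \<Union>C" "(0::real) < c"
        then obtain X where X: "X \<in> C" "u \<in> X" by auto
        then have "conep X" using CA by (auto simp: A_def)
        then show "scalep c u \<in> \<Union>C" using X \<open>0 < c\<close> unfolding conep_def by blast
      qed
      moreover have "E \<subseteq> \<Union>C" using False CA by (auto simp: A_def)
      moreover have "(\<lambda>l. 0, -1) \<notin> \<Union>C" using CA by (auto simp: A_def)
      ultimately show ?thesis by (auto simp: A_def)
    qed
  qed
  then obtain M where MA: "M \<in> A" and Mmax: "\<And>X. X \<in> A \<Longrightarrow> M \<subseteq> X \<Longrightarrow> X = M" by blast
  have EM: "E \<subseteq> M" and cM: "conep M" and badM: "(\<lambda>l. 0, -1) \<notin> M" using MA by (auto simp: A_def)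
  have addM: "\<And>u v. u \<in> M \<Longrightarrow> v \<in> M \<Longrightarrow> addp u v \<in> M"
    and scM: "\<And>u c. u \<in> M \<Longrightarrow> c > 0 \<Longrightarrow> scalep c u \<in> M" using cM by (auto simp: conep_def)
  have topM: "\<And>r. r \<ge> 0 \<Longrightarrow> (\<lambda>l. 0, r) \<in> M" using top EM by auto
  have key1: "r \<ge> 0" if "(\<lambda>l. 0, r) \<in> M" for r
  proof (rule ccontr)
    assume "\<not> r \<ge> 0"
    then have "scalep (-1/r) (\<lambda>l. 0, r) \<in> M" using scM that by auto
    moreover have "scalep (-1/r) (\<lambda>l. 0, r) = (\<lambda>l. 0, -1)" using \<open>\<not> r \<ge> 0\<close> by (simp add: scalep_def)
    ultimately show False using badM by metis
  qed
  have key2: "v \<in> M \<or> scalep (-1) v \<in> M" for v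
  proof -
    have bad_in: "\<exists>d s. d \<in> M \<and> s > 0 \<and> (\<lambda>l. 0, -1) = addp d (scalep s w)" if "w \<notin> M" for w
    proof -
      define X where "X = {addp d (scalep s w) | d s. d \<in> M \<and> s \<ge> 0}"
      have MX: "M \<subseteq> X"
      proof
        fix d assume "d \<in> M"
        moreover have "d = addp d (scalep 0 w)" by (simp add: addp_def scalep_def)
        ultimately show "d \<in> X" unfolding X_def by fastforce
      qed
      have "w \<in> X"
      proof -
        have "w = addp (\<lambda>l. 0, 0) (scalep 1 w)" by (simp add: addp_def scalep_def)
        then show ?thesis unfolding X_def using topM[of 0] by fastforce
      qed
      then have "X \<noteq> M" using that by auto
      have cX: "conep X"
        unfolding conep_def
      proof (intro conjI ballI allI impI)
        fix u v assume "u \<in> X" "v \<in> X"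
        then obtain d1 s1 d2 s2 where "u = addp d1 (scalep s1 w)" "d1 \<in> M" "s1 \<ge> 0"
          "v = addp d2 (scalep s2 w)" "d2 \<in> M" "s2 \<ge> 0" unfolding X_def by blast
        moreover have "addp (addp d1 (scalep s1 w)) (addp d2 (scalep s2 w)) = addp (addp d1 d2) (scalep (s1+s2) w)"
          by (simp add: addp_def scalep_def algebra_simps)
        ultimately show "addp u v \<in> X" unfolding X_def using addM
          by (smt (verit, best) mem_Collect_eq)
      next
        fix u c assume "u \<in> X" "(0::real) < c"
        then obtain d1 s1 where "u = addp d1 (scalep s1 w)" "d1 \<in> M" "s1 \<ge> 0" unfolding X_def by blast
        moreover have "scalep c (addp d1 (scalep s1 w)) = addp (scalep c d1) (scalep (c * s1) w)"
          by (simp add: addp_def scalep_def algebra_simps)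
        ultimately show "scalep c u \<in> X" unfolding X_def using scM \<open>0 < c\<close>
          by (smt (verit, best) mem_Collect_eq mult_nonneg_nonneg)
      qed
      have "(\<lambda>l. 0, -1) \<in> X"
      proof (rule ccontr)
        assume "(\<lambda>l. 0, -1) \<notin> X"
        then have "X \<in> A" using cX MX EM by (auto simp: A_def)
        then show False using Mmax MX \<open>X \<noteq> M\<close> by auto
      qed
      then obtain d s where ds: "d \<in> M" "s \<ge> 0" "(\<lambda>l. 0, -1) = addp d (scalep s w)"
        unfolding X_def by blast
      have "s \<noteq> 0"
      proof
        assume "s = 0"
        then have "(\<lambda>l. 0, -1) = d" using ds(3) by (simp add: addp_def scalep_def)
        then show False using ds(1) badM by simp
      qed
      then have "s > 0" using ds(2) by simp
      then show ?thesis using ds(1,3) by blast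
    qed
    show ?thesis
    proof (rule ccontr)
      assume "\<not> ?thesis"
      then obtain d1 s1 d2 s2 where h: "d1 \<in> M" "s1 > 0" "(\<lambda>l. 0, -1) = addp d1 (scalep s1 v)"
        "d2 \<in> M" "s2 > 0" "(\<lambda>l. 0, -1) = addp d2 (scalep s2 (scalep (-1) v))"
        using bad_in by meson
      have e1': "fst d1 l + s1 * fst v l = 0 \<and> snd d1 + s1 * snd v = -1" for l
        using h(3) by (simp add: addp_def scalep_def fun_eq_iff)
      have e2': "fst d2 l + s2 * (-1 * fst v l) = 0 \<and> snd d2 + s2 * (-1 * snd v) = -1" for l
        using h(6) by (simp only: addp_def scalep_def fun_eq_iff prod_eq_iff fst_conv snd_conv)
      have e1: "fst d1 l = - s1 * fst v l" "snd d1 = -1 - s1 * snd v" for l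
        using e1'[of l] by linarith+
      have e2: "fst d2 l = s2 * fst v l" "snd d2 = -1 + s2 * snd v" for l
        using e2'[of l] by linarith+
      have "addp (scalep s2 d1) (scalep s1 d2) \<in> M" using h addM scM by auto
      moreover have "addp (scalep s2 d1) (scalep s1 d2) = (\<lambda>l. 0, -(s1+s2))"
        by (simp add: addp_def scalep_def e1 e2 algebra_simps)
      ultimately have "(\<lambda>l. 0, -(s1+s2)) \<in> M" by simp
      then have "-(s1+s2) \<ge> 0" by (rule key1)
      then show False using h by auto
    qed
  qed
  define L where "L \<phi> = Inf {r. (\<phi>, r) \<in> M}" for \<phi>
  have ne: "{r. (\<phi>, r) \<in> M} \<noteq> {}" if "\<phi> \<in> linf" for \<phi>
    using fin[OF that] EM by auto
  have bdd: "bdd_below {r. (\<phi>, r) \<in> M}" if phi: "\<phi> \<in> linf" for \<phi>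
  proof -
    obtain s where s: "(\<lambda>l. - \<phi> l, s) \<in> M" using fin[OF linf_neg[OF phi]] EM by auto
    have "-s \<le> r" if "(\<phi>, r) \<in> M" for r
    proof -
      have "addp (\<phi>, r) (\<lambda>l. - \<phi> l, s) \<in> M" using addM that s by auto
      then have "(\<lambda>l. 0, r + s) \<in> M" by (simp add: addp_def)
      then show ?thesis using key1 by force
    qed
    then show ?thesis unfolding bdd_below_def by auto
  qed
  have La: "L \<phi> \<le> r" if "(\<phi>, r) \<in> M" "\<phi> \<in> linf" for \<phi> r
    unfolding L_def using that bdd by (intro cInf_lower) auto
  have Lb: "(\<phi>, r) \<in> M" if h: "r > L \<phi>" "\<phi> \<in> linf" for \<phi> r
  proof -
    obtain r' where r': "(\<phi>, r') \<in> M" "r' < r"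
      using h ne[OF h(2)] bdd[OF h(2)] unfolding L_def by (auto simp: cInf_less_iff)
    have "addp (\<phi>, r') (\<lambda>l. 0, r - r') \<in> M" using addM r' topM by auto
    then show ?thesis by (simp add: addp_def)
  qed
  have Lc: "L (\<lambda>l. - \<phi> l) \<le> - r" if "r < L \<phi>" "\<phi> \<in> linf" for \<phi> r
  proof -
    have "(\<phi>, r) \<notin> M" using La that by force
    then have "scalep (-1) (\<phi>, r) \<in> M" using key2 by blast
    then have "(\<lambda>l. - \<phi> l, - r) \<in> M" by (simp add: scalep_def)
    then show ?thesis using La linf_neg[OF that(2)] by blast
  qed
  have odd1: "L (\<lambda>l. - \<phi> l) \<le> - L \<phi>" if "\<phi> \<in> linf" for \<phi>
  proof (rule ccontr)
    assume "\<not> ?thesis"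
    then have "(L \<phi> - L (\<lambda>l. - \<phi> l))/2 < L \<phi>" by (simp add: field_simps)
    from Lc[OF this that] \<open>\<not> ?thesis\<close> show False by (simp add: field_simps)
  qed
  have odd2: "L \<phi> + L (\<lambda>l. - \<phi> l) \<ge> 0" if "\<phi> \<in> linf" for \<phi>
  proof (rule ccontr)
    assume n: "\<not> ?thesis"
    define e where "e = - (L \<phi> + L (\<lambda>l. - \<phi> l)) / 4"
    have "e > 0" using n by (simp add: e_def)
    then have "(\<phi>, L \<phi> + e) \<in> M" "(\<lambda>l. - \<phi> l, L (\<lambda>l. - \<phi> l) + e) \<in> M"
      using Lb[of \<phi>] Lb[of "\<lambda>l. - \<phi> l"] that linf_neg[OF that] by auto
    then have "addp (\<phi>, L \<phi> + e) (\<lambda>l. - \<phi> l, L (\<lambda>l. - \<phi> l) + e) \<in> M" using addM by blast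
    then have "(\<lambda>l. 0, L \<phi> + e + (L (\<lambda>l. - \<phi> l) + e)) \<in> M" by (simp add: addp_def)
    then have "L \<phi> + e + (L (\<lambda>l. - \<phi> l) + e) \<ge> 0" using key1 by blast
    then show False using n by (simp add: e_def field_simps)
  qed
  have odd: "L (\<lambda>l. - \<phi> l) = - L \<phi>" if "\<phi> \<in> linf" for \<phi>
    using odd1[OF that] odd2[OF that] by linarith
  have upper: "L \<psi> \<le> t" if "\<And>e. e > 0 \<Longrightarrow> (\<psi>, t + e) \<in> M" "\<psi> \<in> linf" for \<psi> t
  proof (rule field_le_epsilon)
    fix e :: real assume "e > 0"
    then show "L \<psi> \<le> t + e" using La that by blast
  qed
  have subadd: "L (\<lambda>l. \<phi> l + \<psi> l) \<le> L \<phi> + L \<psi>" if "\<phi> \<in> linf" "\<psi> \<in> linf" for \<phi> \<psi>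
  proof (rule upper)
    fix e :: real assume "e > 0"
    then have "(\<phi>, L \<phi> + e/2) \<in> M" "(\<psi>, L \<psi> + e/2) \<in> M" using Lb that by auto
    then have "addp (\<phi>, L \<phi> + e/2) (\<psi>, L \<psi> + e/2) \<in> M" using addM by blast
    then show "(\<lambda>l. \<phi> l + \<psi> l, L \<phi> + L \<psi> + e) \<in> M" by (simp add: addp_def add.commute)
  qed (use that linf_add in auto)
  have add: "L (\<lambda>l. \<phi> l + \<psi> l) = L \<phi> + L \<psi>" if "\<phi> \<in> linf" "\<psi> \<in> linf" for \<phi> \<psi>
  proof -
    have "L (\<lambda>l. - (\<phi> l + \<psi> l)) = L (\<lambda>l. (- \<phi> l) + (- \<psi> l))" by simp
    also have "\<dots> \<le> L (\<lambda>l. - \<phi> l) + L (\<lambda>l. - \<psi> l)" using subadd linf_neg that by blast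
    finally have "- L (\<lambda>l. \<phi> l + \<psi> l) \<le> - L \<phi> - L \<psi>"
      using odd that linf_add by (metis diff_conv_add_uminus)
    then show ?thesis using subadd[OF that] by linarith
  qed
  have phom1: "L (\<lambda>l. c * \<phi> l) \<le> c * L \<phi>" if "\<phi> \<in> linf" "c > 0" for \<phi> c
  proof (rule upper)
    fix e :: real assume "e > 0"
    then have "(\<phi>, L \<phi> + e/c) \<in> M" using Lb that by auto
    then have "scalep c (\<phi>, L \<phi> + e/c) \<in> M" using scM that by blast
    then show "(\<lambda>l. c * \<phi> l, c * L \<phi> + e) \<in> M" using that by (simp add: scalep_def algebra_simps)
  qed (use that linf_scale in auto)
  have phom: "L (\<lambda>l. c * \<phi> l) = c * L \<phi>" if "\<phi> \<in> linf" "c > 0" for \<phi> c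
  proof -
    have "L (\<lambda>l. (1/c) * (c * \<phi> l)) \<le> (1/c) * L (\<lambda>l. c * \<phi> l)"
      using phom1[of "\<lambda>l. c * \<phi> l" "1/c"] linf_scale that by auto
    then have "L \<phi> \<le> (1/c) * L (\<lambda>l. c * \<phi> l)" using that by simp
    then have "c * L \<phi> \<le> L (\<lambda>l. c * \<phi> l)" using that by (simp add: field_simps)
    then show ?thesis using phom1[OF that] by linarith
  qed
  have hom: "L (\<lambda>l. c * \<phi> l) = c * L \<phi>" if "\<phi> \<in> linf" for \<phi> c
  proof (cases "c > 0")
    case True then show ?thesis using phom that by blast
  next
    case False
    show ?thesis
    proof (cases "c = 0")
      case True
      have "L (\<lambda>l. - 0) = - L (\<lambda>l. 0)" using odd[of "\<lambda>l. 0"] linf_const by blast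
      then show ?thesis using True by simp
    next
      case False
      then have "-c > 0" using \<open>\<not> c > 0\<close> by simp
      have "L (\<lambda>l. c * \<phi> l) = L (\<lambda>l. - ((-c) * \<phi> l))" by simp
      also have "\<dots> = - L (\<lambda>l. (-c) * \<phi> l)" using odd linf_scale that by blast
      also have "\<dots> = c * L \<phi>" using phom[OF that \<open>-c > 0\<close>] by simp
      finally show ?thesis .
    qed
  qed
  show ?thesis using add hom La EM by blast
qed



lemma pd_neg:
  assumes "\<Phi> \<in> pos_dual" "\<phi> \<in> linf" "\<And>l. \<phi> l \<le> 0"
  shows "\<Phi> \<phi> \<le> 0"
proof -
  have H: "\<forall>\<phi>\<in>linf. \<forall>c. \<Phi> (\<lambda>l. c * \<phi> l) = c * \<Phi> \<phi>"
    and P: "\<forall>\<phi>\<in>linf. (\<forall>l. 0 \<le> \<phi> l) \<longrightarrow> 0 \<le> \<Phi> \<phi>"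
    using assms(1) unfolding pos_dual_def by blast+
  have "\<Phi> (\<lambda>l. (-1) * \<phi> l) = (-1) * \<Phi> \<phi>" using H assms(2) by blast
  moreover have "0 \<le> \<Phi> (\<lambda>l. (-1) * \<phi> l)"
    using P linf_scale[OF assms(2), of "-1"] assms(3) by simp
  ultimately show ?thesis by simp
qed

lemma pd_sum:
  fixes m :: nat and t :: "nat \<Rightarrow> real"
  assumes "\<Phi> \<in> pos_dual" "\<And>j. g j \<in> linf"
  shows "(\<lambda>l. \<Sum>j<m. t j * g j l) \<in> linf \<and> \<Phi> (\<lambda>l. \<Sum>j<m. t j * g j l) = (\<Sum>j<m. t j * \<Phi> (g j))"
proof (induction m)
  case 0
  have H: "\<forall>\<phi>\<in>linf. \<forall>c. \<Phi> (\<lambda>l. c * \<phi> l) = c * \<Phi> \<phi>"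
    using assms(1) unfolding pos_dual_def by blast
  have "\<Phi> (\<lambda>l. 0 * (0::real)) = 0 * \<Phi> (\<lambda>l. 0)" using H[rule_format, OF linf_const[of 0], of 0] by simp
  then show ?case using linf_const by simp
next
  case (Suc m)
  have lm: "(\<lambda>l. t m * g m l) \<in> linf" using linf_scale assms(2) by blast
  have "\<Phi> (\<lambda>l. (\<Sum>j<m. t j * g j l) + t m * g m l) = \<Phi> (\<lambda>l. \<Sum>j<m. t j * g j l) + \<Phi> (\<lambda>l. t m * g m l)"
    using Suc lm assms(1) by (auto simp: pos_dual_def)
  moreover have "\<Phi> (\<lambda>l. t m * g m l) = t m * \<Phi> (g m)" using assms by (auto simp: pos_dual_def)
  ultimately show ?case using Suc lm linf_add[OF conjunct1[OF Suc.IH] lm] by simp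
qed

lemma zero_pd: "(\<lambda>\<phi>. 0) \<in> pos_dual"
  by (auto simp: pos_dual_def intro: exI[of _ 0])

lemma sum_nth_div:
  fixes qs :: "(real \<times> 'b) list" and N :: real
  shows "(\<Sum>j<length qs. fst (qs!j) / N * h (snd (qs!j))) = (\<Sum>p\<leftarrow>qs. fst p * h (snd p)) / N"
proof -
  have eq: "(\<Sum>p\<leftarrow>qs. fst p * h (snd p)) = (\<Sum>j<length qs. fst (qs!j) * h (snd (qs!j)))"
    by (simp add: sum_list_sum_nth atLeast0LessThan)
  show ?thesis unfolding eq by (simp add: sum_divide_distrib)
qed

lemma sum_list_neg: "(\<Sum>p\<leftarrow>ps. fst p * - h p) = - (\<Sum>p\<leftarrow>ps. fst p * (h p :: real))"
  by (induction ps) auto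

lemma linf_bdd: "\<phi> \<in> linf \<Longrightarrow> bdd_above (range \<phi>)"
  by (auto simp: linf_iff bdd_above_def intro: abs_le_D1)

lemma sum_list_scale:
  "(\<Sum>p\<leftarrow>map (\<lambda>p. (c * fst p, snd p)) ps. fst p * h (snd p)) = c * (\<Sum>p\<leftarrow>ps. fst p * (h (snd p) :: real))"
  by (induction ps) (auto simp: algebra_simps)



theorem theorem4p2:
  fixes f :: "'x \<Rightarrow> real" and fl :: "'l \<Rightarrow> 'x \<Rightarrow> real"
    and x0 :: 'x
  defines "X0 \<equiv> {x. (SUP l. fl l x) \<le> 0}"
  assumes bounded: "\<And>x. (\<lambda>l. fl l x) \<in> linf"
    and feasible: "x0 \<in> X0"
    and optimal: "ereal (f x0) = (INF x\<in>X0. ereal (f x))"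
    and slater: "\<exists>x1. (SUP l. fl l x1) < 0"
  shows "(\<exists>\<Phi>0\<in>pos_dual. saddle_point f fl x0 \<Phi>0) \<longleftrightarrow>
         infsup_convex (augmented_family f fl x0)"
proof -
  obtain x1 where x1: "(SUP l. fl l x1) < 0" using slater by blast
  define s1 where "s1 = (SUP l. fl l x1)"
  have s1neg: "s1 < 0" using x1 s1_def by simp
  have upper: "fl l x \<le> (SUP l. fl l x)" for l x using linf_upper[OF bounded[of x]] .
  have x1le: "fl l x1 \<le> s1" for l using upper s1_def by simp
  have x0feas: "fl l x0 \<le> 0" for l using feasible upper[of l x0] unfolding X0_def by force
  have fopt: "f x0 \<le> f x" if "x \<in> X0" for x
  proof -
    have "ereal (f x0) \<le> ereal (f x)" unfolding optimal using that by (rule INF_lower)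
    then show ?thesis by simp
  qed
  define g where "g = augmented_family f fl x0"
  have g_None: "g None x = f x - f x0" and g_Some: "g (Some l) x = fl l x" for x l
    by (simp_all add: g_def augmented_family_def)
  have lhs_ge: "0 \<le> (INF x. SUP i. ereal (g i x))"
  proof (rule INF_greatest)
    fix x
    show "0 \<le> (SUP i. ereal (g i x))"
    proof (cases "(SUP l. fl l x) \<le> 0")
      case True
      then have "x \<in> X0" by (simp add: X0_def)
      then have "0 \<le> ereal (g None x)" using fopt by (simp add: g_None)
      also have "ereal (g None x) \<le> (SUP i. ereal (g i x))" by (rule SUP_upper) simp
      finally show ?thesis .
    next
      case False
      then obtain l where "0 < fl l x"
        using less_cSUP_iff[of UNIV "\<lambda>l. fl l x" 0] linf_bdd[OF bounded[of x]] by auto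
      then have "0 \<le> ereal (g (Some l) x)" by (simp add: g_Some)
      also have "ereal (g (Some l) x) \<le> (SUP i. ereal (g i x))" by (rule SUP_upper) simp
      finally show ?thesis .
    qed
  qed
  have lhs_le: "(INF x. SUP i. ereal (g i x)) \<le> 0"
  proof -
    have "(INF x. SUP i. ereal (g i x)) \<le> (SUP i. ereal (g i x0))" by (rule INF_lower) simp
    also have "\<dots> \<le> 0"
    proof (rule SUP_least)
      fix i show "ereal (g i x0) \<le> 0"
        by (cases i) (auto simp: g_None g_Some x0feas)
    qed
    finally show ?thesis .
  qed
  show ?thesis
  proof
    assume "\<exists>\<Phi>0\<in>pos_dual. saddle_point f fl x0 \<Phi>0"
    then obtain \<Phi>0 where P0: "\<Phi>0 \<in> pos_dual" and sp: "saddle_point f fl x0 \<Phi>0" by blast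
    have sp2: "f x0 + \<Phi>0 (\<lambda>l. fl l x0) \<le> f x + \<Phi>0 (\<lambda>l. fl l x)" for x
      using sp P0 unfolding saddle_point_def lagrangian_def by blast
    have "f x0 + 0 \<le> f x0 + \<Phi>0 (\<lambda>l. fl l x0)"
      using sp zero_pd unfolding saddle_point_def lagrangian_def by fastforce
    then have key: "f x0 \<le> f x + \<Phi>0 (\<lambda>l. fl l x)" for x using sp2[of x] by linarith
    show "infsup_convex (augmented_family f fl x0)"
      unfolding infsup_convex_def g_def[symmetric]
    proof (intro allI impI)
      fix m :: nat and t :: "nat \<Rightarrow> real" and xs :: "nat \<Rightarrow> 'x"
      assume H: "1 \<le> m \<and> (\<forall>j<m. 0 \<le> t j) \<and> (\<Sum>j<m. t j) = 1"
      show "(INF x. SUP i. ereal (g i x)) \<le> (SUP i. ereal (\<Sum>j<m. t j * g i (xs j)))"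
      proof (rule ccontr)
        assume "\<not> ?thesis"
        then have lt: "(SUP i. ereal (\<Sum>j<m. t j * g i (xs j))) < 0" using lhs_le by auto
        have each: "(\<Sum>j<m. t j * g i (xs j)) < 0" for i
        proof -
          have "ereal (\<Sum>j<m. t j * g i (xs j)) < 0"
            by (rule le_less_trans[OF _ lt]) (rule SUP_upper, simp)
          then show ?thesis by simp
        qed
        have eN: "(\<Sum>j<m. t j * (f (xs j) - f x0)) < 0" using each[of None] by (simp add: g_None)
        have eS: "(\<Sum>j<m. t j * fl l (xs j)) \<le> 0" for l using each[of "Some l"] by (simp add: g_Some)
        define \<psi> where "\<psi> = (\<lambda>l. \<Sum>j<m. t j * fl l (xs j))"
        have ps: "\<psi> \<in> linf \<and> \<Phi>0 \<psi> = (\<Sum>j<m. t j * \<Phi>0 (\<lambda>l. fl l (xs j)))"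
          unfolding \<psi>_def using pd_sum[OF P0, where g="\<lambda>j l. fl l (xs j)" and m=m and t=t] bounded by simp
        have "\<Phi>0 \<psi> \<le> 0" using ps eS unfolding \<psi>_def by (intro pd_neg[OF P0]) auto
        have sumt: "(\<Sum>j<m. t j * c) = c" for c using H by (simp add: sum_distrib_right[symmetric])
        have "f x0 = (\<Sum>j<m. t j * f x0)" using sumt by simp
        also have "\<dots> \<le> (\<Sum>j<m. t j * (f (xs j) + \<Phi>0 (\<lambda>l. fl l (xs j))))"
          by (rule sum_mono) (use H key in \<open>auto intro: mult_left_mono\<close>)
        also have "\<dots> = (\<Sum>j<m. t j * f (xs j)) + \<Phi>0 \<psi>"
          using ps by (simp add: distrib_left sum.distrib)
        also have "\<dots> \<le> (\<Sum>j<m. t j * f (xs j))" using \<open>\<Phi>0 \<psi> \<le> 0\<close> by simp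
        finally have "f x0 \<le> (\<Sum>j<m. t j * f (xs j))" .
        moreover have "(\<Sum>j<m. t j * (f (xs j) - f x0)) = (\<Sum>j<m. t j * f (xs j)) - f x0"
          using sumt[of "f x0"] by (simp add: right_diff_distrib sum_subtractf)
        ultimately show False using eN by linarith
      qed
    qed
  next
    assume isc: "infsup_convex (augmented_family f fl x0)"
    define E :: "(('l \<Rightarrow> real) \<times> real) set" where
      "E = {(\<phi>, r). \<exists>ps. (\<forall>p\<in>set ps. 0 \<le> fst p) \<and> (\<forall>l. \<phi> l \<le> (\<Sum>p\<leftarrow>ps. fst p * - fl l (snd p)))
              \<and> (\<Sum>p\<leftarrow>ps. fst p * (f (snd p) - f x0)) \<le> r}"
    have cE: "conep E"
      unfolding conep_def
    proof (intro conjI ballI allI impI)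
      fix u v assume "u \<in> E" "v \<in> E"
      then obtain \<phi>1 r1 ps1 \<phi>2 r2 ps2 where u: "u = (\<phi>1, r1)" "\<forall>p\<in>set ps1. 0 \<le> fst p"
        "\<forall>l. \<phi>1 l \<le> (\<Sum>p\<leftarrow>ps1. fst p * - fl l (snd p))" "(\<Sum>p\<leftarrow>ps1. fst p * (f (snd p) - f x0)) \<le> r1"
        and v: "v = (\<phi>2, r2)" "\<forall>p\<in>set ps2. 0 \<le> fst p"
        "\<forall>l. \<phi>2 l \<le> (\<Sum>p\<leftarrow>ps2. fst p * - fl l (snd p))" "(\<Sum>p\<leftarrow>ps2. fst p * (f (snd p) - f x0)) \<le> r2"
        unfolding E_def by blast
      have "\<forall>l. \<phi>1 l + \<phi>2 l \<le> (\<Sum>p\<leftarrow>ps1 @ ps2. fst p * - fl l (snd p))"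
        using u(3) v(3) by (simp add: add_mono)
      moreover have "(\<Sum>p\<leftarrow>ps1 @ ps2. fst p * (f (snd p) - f x0)) \<le> r1 + r2"
        using u(4) v(4) by simp
      moreover have "\<forall>p\<in>set (ps1 @ ps2). 0 \<le> fst p" using u(2) v(2) by auto
      ultimately have "(\<lambda>l. \<phi>1 l + \<phi>2 l, r1 + r2) \<in> E" unfolding E_def mem_Collect_eq prod.case by blast
      then show "addp u v \<in> E" unfolding addp_def u v by simp
    next
      fix u and c :: real assume "u \<in> E" "0 < c"
      then obtain \<phi>1 r1 ps1 where u: "u = (\<phi>1, r1)" "\<forall>p\<in>set ps1. 0 \<le> fst p"
        "\<forall>l. \<phi>1 l \<le> (\<Sum>p\<leftarrow>ps1. fst p * - fl l (snd p))" "(\<Sum>p\<leftarrow>ps1. fst p * (f (snd p) - f x0)) \<le> r1"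
        unfolding E_def by blast
      define qs where "qs = map (\<lambda>p. (c * fst p, snd p)) ps1"
      have "\<forall>l. c * \<phi>1 l \<le> (\<Sum>p\<leftarrow>qs. fst p * - fl l (snd p))"
      proof
        fix l
        have "c * \<phi>1 l \<le> c * (\<Sum>p\<leftarrow>ps1. fst p * - fl l (snd p))"
          using u(3) \<open>0 < c\<close> by (simp add: mult_left_mono)
        then show "c * \<phi>1 l \<le> (\<Sum>p\<leftarrow>qs. fst p * - fl l (snd p))"
          unfolding qs_def sum_list_scale[where c=c and ps=ps1 and h="\<lambda>x. - fl l x"] .
      qed
      moreover have "(\<Sum>p\<leftarrow>qs. fst p * (f (snd p) - f x0)) \<le> c * r1"
        using u(4) \<open>0 < c\<close> unfolding qs_def sum_list_scale[where c=c and ps=ps1 and h="\<lambda>x. f x - f x0"]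
        by (simp add: mult_left_mono)
      moreover have "\<forall>p\<in>set qs. 0 \<le> fst p" using u(2) \<open>0 < c\<close> unfolding qs_def by auto
      ultimately have "(\<lambda>l. c * \<phi>1 l, c * r1) \<in> E" unfolding E_def mem_Collect_eq prod.case by blast
      then show "scalep c u \<in> E" unfolding scalep_def u by simp
    qed
    have top: "(\<lambda>l. 0, r) \<in> E" if "r \<ge> 0" for r
      unfolding E_def using that by (auto intro!: exI[of _ "[]"])
    have fin: "\<exists>r. (\<phi>, r) \<in> E" if phl: "\<phi> \<in> linf" for \<phi>
    proof -
      obtain B where B: "\<forall>l. \<bar>\<phi> l\<bar> \<le> B" using phl by (auto simp: linf_iff)
      define a where "a = \<bar>B\<bar> / (- s1)"
      have a0: "a \<ge> 0" using s1neg by (simp add: a_def divide_nonneg_neg)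
      have "\<phi> l \<le> a * - fl l x1" for l
      proof -
        have "\<phi> l \<le> \<bar>B\<bar>" using B by (meson abs_ge_self abs_le_D1 order_trans)
        also have "\<dots> = a * (- s1)" using s1neg by (simp add: a_def)
        also have "\<dots> \<le> a * - fl l x1" using a0 x1le[of l] by (simp add: mult_left_mono)
        finally show ?thesis .
      qed
      then have "(\<phi>, a * (f x1 - f x0)) \<in> E"
        unfolding E_def using a0 by (auto intro!: exI[of _ "[(a, x1)]"])
      then show ?thesis by blast
    qed
    have badE: "(\<lambda>l. 0, -1) \<notin> E"
    proof
      assume "(\<lambda>l. 0, -1) \<in> E"
      then obtain ps where pos: "\<forall>p\<in>set ps. 0 \<le> fst p"
        and hphi: "\<forall>l. 0 \<le> (\<Sum>p\<leftarrow>ps. fst p * - fl l (snd p))"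
        and hS: "(\<Sum>p\<leftarrow>ps. fst p * (f (snd p) - f x0)) \<le> -1"
        unfolding E_def by auto
      define S where "S = (\<Sum>p\<leftarrow>ps. fst p * (f (snd p) - f x0))"
      define d where "d = f x1 - f x0"
      define e where "e = - S / (2 * (\<bar>d\<bar> + 1))"
      define A where "A = (\<Sum>p\<leftarrow>ps. fst p)"
      define N where "N = A + e"
      define qs where "qs = ps @ [(e, x1)]"
      define m where "m = length qs"
      define t where "t j = fst (qs ! j) / N" for j
      define xs where "xs j = snd (qs ! j)" for j
      have Sneg: "S \<le> -1" using hS S_def by simp
      have e0: "e > 0" using Sneg unfolding e_def by (intro divide_pos_pos) auto
      have A0: "A \<ge> 0" unfolding A_def using pos by (induction ps) auto
      have N0: "N > 0" using e0 A0 N_def by simp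
      have ed: "e * d \<le> - S / 2"
      proof -
        have "e * d \<le> e * (\<bar>d\<bar> + 1)" using e0 by (intro mult_left_mono) auto
        also have "\<dots> = - S / 2" unfolding e_def by (simp add: field_simps)
        finally show ?thesis .
      qed
      have sumform: "(\<Sum>j<m. t j * h (xs j)) = ((\<Sum>p\<leftarrow>ps. fst p * h (snd p)) + e * h x1) / N" for h
        unfolding m_def t_def xs_def using sum_nth_div[of qs N h] by (simp add: qs_def)
      have m1: "1 \<le> m" by (simp add: m_def qs_def)
      have tpos: "\<forall>j<m. 0 \<le> t j"
      proof (intro allI impI)
        fix j assume "j < m"
        then have "qs ! j \<in> set qs" by (simp add: m_def)
        then have "0 \<le> fst (qs ! j)" using pos e0 by (auto simp: qs_def)
        then show "0 \<le> t j" using N0 by (simp add: t_def)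
      qed
      have tsum: "(\<Sum>j<m. t j) = 1"
        using sumform[of "\<lambda>_. 1"] N0 by (simp add: A_def[symmetric] N_def)
      have ineq: "(INF x. SUP i. ereal (g i x)) \<le> (SUP i. ereal (\<Sum>j<m. t j * g i (xs j)))"
        using isc m1 tpos tsum unfolding infsup_convex_def g_def by blast
      define c where "c = max (e * s1) (S / 2) / N"
      have cneg: "c < 0" unfolding c_def using N0 e0 s1neg Sneg
        by (simp add: divide_neg_pos mult_pos_neg)
      have "(SUP i. ereal (\<Sum>j<m. t j * g i (xs j))) \<le> ereal c"
      proof (rule SUP_least)
        fix i
        show "ereal (\<Sum>j<m. t j * g i (xs j)) \<le> ereal c"
        proof (cases i)
          case None
          have "(\<Sum>j<m. t j * g i (xs j)) = (S + e * d) / N"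
            unfolding sumform using None by (simp add: g_None S_def d_def)
          also have "\<dots> \<le> c" unfolding c_def using N0 ed by (intro divide_right_mono) auto
          finally show ?thesis by simp
        next
          case (Some l)
          have le0: "(\<Sum>p\<leftarrow>ps. fst p * fl l (snd p)) \<le> 0"
            using hphi[rule_format, of l] sum_list_neg[where ps=ps and h="\<lambda>p. fl l (snd p)"] by simp
          have eqS: "(\<Sum>j<m. t j * g i (xs j)) = ((\<Sum>p\<leftarrow>ps. fst p * fl l (snd p)) + e * fl l x1) / N"
            unfolding sumform using Some by (simp add: g_Some)
          have "e * fl l x1 \<le> e * s1" using x1le[of l] e0 by (simp add: mult_left_mono)
          then have "(\<Sum>p\<leftarrow>ps. fst p * fl l (snd p)) + e * fl l x1 \<le> e * s1"
            using le0 by linarith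
          then have "(\<Sum>p\<leftarrow>ps. fst p * fl l (snd p)) + e * fl l x1 \<le> max (e * s1) (S / 2)"
            by (rule order_trans) (rule max.cobounded1)
          then have "((\<Sum>p\<leftarrow>ps. fst p * fl l (snd p)) + e * fl l x1) / N \<le> c"
            unfolding c_def using N0 by (intro divide_right_mono) auto
          then show ?thesis using eqS by simp
        qed
      qed
      then have "0 \<le> ereal c" using ineq lhs_ge by (meson order_trans)
      then show False using cneg by simp
    qed
    obtain L where Ladd: "\<forall>\<phi>\<in>linf. \<forall>\<psi>\<in>linf. L (\<lambda>l. \<phi> l + \<psi> l) = L \<phi> + L \<psi>"
      and Lhom: "\<forall>\<phi>\<in>linf. \<forall>c. L (\<lambda>l. c * \<phi> l) = c * L \<phi>"
      and Lle: "\<And>\<phi> r. (\<phi>, r) \<in> E \<Longrightarrow> \<phi> \<in> linf \<Longrightarrow> L \<phi> \<le> r"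
      using maxcone[OF cE badE top fin] by blast
    have Lneg: "L (\<lambda>l. - \<phi> l) = - L \<phi>" if "\<phi> \<in> linf" for \<phi>
      using Lhom[rule_format, OF that, of "-1"] by simp
    have Lpos: "0 \<le> L \<phi>" if "\<phi> \<in> linf" "\<forall>l. 0 \<le> \<phi> l" for \<phi>
    proof -
      have "(\<lambda>l. - \<phi> l, 0) \<in> E" unfolding E_def using that by (auto intro!: exI[of _ "[]"])
      then have "L (\<lambda>l. - \<phi> l) \<le> 0" using Lle linf_neg[OF that(1)] by blast
      then show ?thesis using Lneg[OF that(1)] by simp
    qed
    have Lmono: "L \<phi> \<le> L \<psi>" if "\<phi> \<in> linf" "\<psi> \<in> linf" "\<forall>l. \<phi> l \<le> \<psi> l" for \<phi> \<psi>
    proof -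
      have mm: "(\<lambda>l. \<psi> l + - \<phi> l) \<in> linf" using linf_add[OF that(2) linf_neg[OF that(1)]] .
      have "0 \<le> L (\<lambda>l. \<psi> l + - \<phi> l)" using that(3) by (intro Lpos[OF mm]) auto
      also have "\<dots> = L \<psi> + L (\<lambda>l. - \<phi> l)" using Ladd[rule_format, OF that(2) linf_neg[OF that(1)]] .
      also have "\<dots> = L \<psi> - L \<phi>" using Lneg[OF that(1)] by simp
      finally show ?thesis by simp
    qed
    have Lconst: "L (\<lambda>l. c) = c * L (\<lambda>l. 1)" for c
      using Lhom[rule_format, OF linf_const[of 1], of c] by simp
    have keyL: "f x0 - f x \<le> L (\<lambda>l. fl l x)" for x
    proof -
      have "(\<lambda>l. - fl l x, f x - f x0) \<in> E" unfolding E_def by (auto intro!: exI[of _ "[(1, x)]"])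
      then have "L (\<lambda>l. - fl l x) \<le> f x - f x0" using Lle linf_neg[OF bounded] by blast
      then show ?thesis using Lneg[OF bounded] by simp
    qed
    have "L \<in> pos_dual"
      unfolding pos_dual_def
    proof (intro CollectI conjI)
      show "\<exists>C. \<forall>\<phi>\<in>linf. \<bar>L \<phi>\<bar> \<le> C * sup_norm \<phi>"
      proof (intro exI ballI)
        fix \<phi> :: "'l \<Rightarrow> real" assume ph: "\<phi> \<in> linf"
        define n where "n = sup_norm \<phi>"
        have b: "\<bar>\<phi> l\<bar> \<le> n" for l using linf_upper_abs[OF ph] n_def by simp
        have "L \<phi> \<le> L (\<lambda>l. n)" using b ph linf_const by (intro Lmono) (auto simp: abs_le_iff)
        moreover have "L (\<lambda>l. - \<phi> l) \<le> L (\<lambda>l. n)" using b ph linf_const linf_neg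
          by (intro Lmono) (auto simp: abs_le_iff)
        ultimately show "\<bar>L \<phi>\<bar> \<le> L (\<lambda>l. 1) * sup_norm \<phi>"
          using Lconst[of n] Lneg[OF ph] n_def by (simp add: mult.commute)
      qed
    qed (use Ladd Lhom Lpos in auto)
    moreover have "saddle_point f fl x0 L"
      unfolding saddle_point_def lagrangian_def
    proof (intro allI ballI conjI)
      have L0: "L (\<lambda>l. fl l x0) = 0"
      proof -
        have "L (\<lambda>l. fl l x0) \<le> L (\<lambda>l. 0)" using x0feas bounded linf_const by (intro Lmono) auto
        moreover have "L (\<lambda>l. 0) = 0" using Lconst[of 0] by simp
        ultimately show ?thesis using keyL[of x0] by simp
      qed
      fix x and \<Phi> :: "('l \<Rightarrow> real) \<Rightarrow> real" assume "\<Phi> \<in> pos_dual"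
      then have "\<Phi> (\<lambda>l. fl l x0) \<le> 0" using pd_neg bounded x0feas by blast
      then show "f x0 + \<Phi> (\<lambda>l. fl l x0) \<le> f x0 + L (\<lambda>l. fl l x0)" using L0 by simp
      show "f x0 + L (\<lambda>l. fl l x0) \<le> f x + L (\<lambda>l. fl l x)" using L0 keyL[of x] by simp
    qed
    ultimately show "\<exists>\<Phi>0\<in>pos_dual. saddle_point f fl x0 \<Phi>0" by blast
  qed
qed


end
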